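(* Fix $c \in \mathbb{R}$ and $p \in (0,1)$. For $x^{\text{obs}} > c$ let $\theta(p)$ be the unique solution $\theta$ of $F(x^{\text{obs}};\theta,c) = p$, and let $\theta^*(p) = x^{\text{obs}} - \Phi^{-1}(p)$ (the unique solution of $\Phi(x^{\text{obs}} - \theta) = p$). Then $\theta(p) - \theta^*(p) \to 0$ as $x^{\text{obs}} \to \infty$.
   Context: Let $\Phi$ denote the standard normal distribution function. For $c \in \mathbb{R}$, $a \ge c$ and $\theta \in \mathbb{R}$ define $$F(a;\theta,c) = \frac{\Phi(a-\theta) - \Phi(c-\theta)}{1-\Phi(c-\theta)}.$$ It is known that for each fixed $x^{\text{obs}} > c$ the map $\theta \mapsto F(x^{\text{obs}};\theta,c)$ is continuous and strictly decreasing from $\mathbb{R}$ onto $(0,1)$, so $\theta(p)$ is well defined. *)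

theory Defs
  imports "HOL-Probability.Probability"
begin

definition Phi :: "real \<Rightarrow> real" where
  "Phi x = measure (density lborel std_normal_density) {..x}"

text \<open>Quantile function: the unique z with Phi z = p (meaningful for 0 < p < 1).\<close>
definition Phi_inv :: "real \<Rightarrow> real" where
  "Phi_inv p = (THE z. Phi z = p)"

definition F :: "real \<Rightarrow> real \<Rightarrow> real \<Rightarrow> real" where
  "F a \<theta> c = (Phi (a - \<theta>) - Phi (c - \<theta>)) / (1 - Phi (c - \<theta>))"

definition theta_p :: "real \<Rightarrow> real \<Rightarrow> real \<Rightarrow> real" where
  "theta_p c x_obs p = (THE \<theta>. F x_obs \<theta> c = p)"

end

theory Submission
  imports Defs "HOL-Real_Asymp.Real_Asymp"
begin



definition PM :: "real measure" where "PM = density lborel std_normal_density"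

lemma rd: "real_distribution PM"
  unfolding PM_def real_distribution_def real_distribution_axioms_def
  using prob_space_normal_density by auto

lemma Phi_cdf: "Phi = cdf PM"
  by (auto simp: fun_eq_iff Phi_def PM_def cdf_def)

lemma Phi_diff_int:
  assumes "a \<le> b"
  shows "Phi b - Phi a = integral {a..b} std_normal_density"
proof -
  interpret real_distribution PM by (rule rd)
  have 1: "Phi b - Phi a = measure PM {a<..b}"
    using cdf_diff_eq[of a b] assms by (cases "a = b") (auto simp: Phi_cdf)
  have 2: "emeasure PM {a<..b} = (\<integral>\<^sup>+x\<in>{a<..b}. ennreal (std_normal_density x)\<partial>lborel)"
    unfolding PM_def by (subst emeasure_density) auto
  have 3: "(\<integral>\<^sup>+x. (indicator {a<..b} x * std_normal_density x) \<partial>lborel) = ennreal (measure PM {a<..b})"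
    using 2 emeasure_eq_measure[of "{a<..b}"] by (auto intro!: nn_integral_cong simp: indicator_def)
  have "((\<lambda>x. indicator {a<..b} x * std_normal_density x) has_integral measure PM {a<..b}) UNIV"
    by (rule nn_integral_has_integral[OF _ _ 3]) auto
  then have "(std_normal_density has_integral measure PM {a<..b}) {a<..b}"
  proof -
    have "(\<lambda>x. indicator {a<..b} x * std_normal_density x) = (\<lambda>x. if x \<in> {a<..b} then std_normal_density x else 0)"
      by (auto simp: fun_eq_iff)
    with \<open>((\<lambda>x. indicator {a<..b} x * std_normal_density x) has_integral measure PM {a<..b}) UNIV\<close>
    show ?thesis by (simp only: has_integral_restrict_UNIV)
  qed
  then have "(std_normal_density has_integral measure PM {a<..b}) {a..b}"
    by (subst has_integral_spike_set_eq[of "{a..b}" "{a<..b}"]) (rule negligible_subset[of "{a}"], auto)+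
  then show ?thesis using 1 by (simp add: integral_unique)
qed


lemma phi_cont: "continuous_on A std_normal_density"
  unfolding normal_density_def by (intro continuous_intros) auto

lemma Phi_deriv: "(Phi has_real_derivative std_normal_density x) (at x)"
proof -
  have "((\<lambda>t. Phi (x-1) + integral {x-1..t} std_normal_density) has_real_derivative
          0 + std_normal_density x) (at x within {x-1..x+1})"
    by (rule DERIV_add[OF DERIV_const integral_has_real_derivative[OF phi_cont]]) auto
  then have "((\<lambda>t. Phi (x-1) + integral {x-1..t} std_normal_density) has_real_derivative
          std_normal_density x) (at x)"
    using at_within_Icc_at[of "x-1" x "x+1"] by simp
  then show ?thesis
    by (rule has_field_derivative_transform_within_open[where S="{x-1<..<x+1}"])
       (auto simp: Phi_diff_int[symmetric])
qed

lemma Phi_isCont: "isCont Phi x"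
  using Phi_deriv DERIV_isCont by blast

lemma isCont_Phi'[continuous_intros]: "isCont f x \<Longrightarrow> isCont (\<lambda>x. Phi (f x)) x"
  using isCont_o2[OF _ Phi_isCont] by blast

lemma Phi_strict: "x < y \<Longrightarrow> Phi x < Phi y"
  by (rule DERIV_pos_imp_increasing) (auto intro!: exI[of _ "std_normal_density _"] Phi_deriv normal_density_pos)

lemma Phi_bot: "(Phi \<longlongrightarrow> 0) at_bot"
proof -
  interpret real_distribution PM by (rule rd)
  show ?thesis using cdf_lim_at_bot by (simp add: Phi_cdf)
qed

lemma Phi_top: "(Phi \<longlongrightarrow> 1) at_top"
proof -
  interpret real_distribution PM by (rule rd)
  show ?thesis using cdf_lim_at_top_prob by (simp add: Phi_cdf)
qed

lemma Phi_le1: "Phi x \<le> 1"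
proof -
  interpret real_distribution PM by (rule rd)
  show ?thesis using cdf_bounded_prob by (simp add: Phi_cdf)
qed

lemma Phi_ge0: "0 \<le> Phi x"
proof -
  interpret real_distribution PM by (rule rd)
  show ?thesis using cdf_nonneg by (simp add: Phi_cdf)
qed

lemma Phi_lt1: "Phi x < 1"
  using Phi_strict[of x "x+1"] Phi_le1[of "x+1"] by simp

lemma Phi_gt0: "0 < Phi x"
  using Phi_strict[of "x-1" x] Phi_ge0[of "x-1"] by simp


lemma phi_deriv: "(std_normal_density has_real_derivative (- x * std_normal_density x)) (at x)"
  unfolding normal_density_def
  by (auto intro!: derivative_eq_intros simp: power2_eq_square field_simps)



lemma phi_div_lim: "((\<lambda>v. std_normal_density v / v) \<longlongrightarrow> 0) at_top"
proof -
  have "((\<lambda>v::real. exp (- (v^2) / 2) / v) \<longlongrightarrow> 0) at_top" by real_asymp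
  then have "((\<lambda>v. (1 / sqrt (2 * pi)) * (exp (- (v^2) / 2) / v)) \<longlongrightarrow> (1 / sqrt (2 * pi)) * 0) at_top"
    by (rule tendsto_mult_left)
  then show ?thesis by (simp add: std_normal_density_def)
qed
lemma mills: "u * (1 - Phi u) < std_normal_density u"
proof (cases "u > 0")
  case False
  then show ?thesis using normal_density_pos[of 1 0 u] Phi_lt1[of u]
    by (smt (verit) mult_nonpos_nonneg)
next
  case True
  define m where "m v = (1 - Phi v) - std_normal_density v / v" for v
  have dm: "DERIV m v :> std_normal_density v / v^2" if "v > 0" for v
  proof -
    have "DERIV m v :> (0 - std_normal_density v) - ((- v * std_normal_density v) * v - std_normal_density v * 1) / (v * v)"
      unfolding m_def using that
      by (intro derivative_intros Phi_deriv phi_deriv DERIV_ident) auto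
    moreover have "(0 - std_normal_density v) - ((- v * std_normal_density v) * v - std_normal_density v * 1) / (v * v)
       = std_normal_density v / v^2" using that by (simp add: field_simps power2_eq_square)
    ultimately show ?thesis by simp
  qed
  have inc: "m x < m y" if "0 < x" "x < y" for x y
    by (rule DERIV_pos_imp_increasing[OF that(2)])
       (use that in \<open>auto intro!: exI[of _ "std_normal_density _ / _^2"] dm normal_density_pos divide_pos_pos\<close>)
  have lim: "(m \<longlongrightarrow> 0) at_top"
  proof -
    have "((\<lambda>v. (1 - Phi v) - std_normal_density v / v) \<longlongrightarrow> (1 - 1) - 0) at_top"
      by (intro tendsto_intros Phi_top phi_div_lim)
    then show ?thesis by (simp add: m_def[abs_def])
  qed
  have "m (u+1) \<le> 0"
  proof (rule tendsto_lowerbound[OF lim])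
    show "\<forall>\<^sub>F x in at_top. m (u + 1) \<le> m x"
      using eventually_ge_at_top[of "u+1"]
      by eventually_elim (use inc True in \<open>force simp: le_less\<close>)
  qed simp
  then have "m u < 0" using inc[of u "u+1"] True by simp
  then show ?thesis using True by (simp add: m_def field_simps)
qed


definition haz :: "real \<Rightarrow> real" where "haz v = std_normal_density v / (1 - Phi v)"

lemma haz_strict: assumes "x < y" shows "haz x < haz y"
proof (rule DERIV_pos_imp_increasing[OF assms])
  fix v :: real
  have S: "1 - Phi v > 0" using Phi_lt1[of v] by simp
  have "DERIV haz v :> ((- v * std_normal_density v) * (1 - Phi v) - std_normal_density v * (0 - std_normal_density v)) / ((1 - Phi v) * (1 - Phi v))"
    unfolding haz_def[abs_def] using S
    by (intro derivative_intros Phi_deriv phi_deriv) auto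
  moreover have "((- v * std_normal_density v) * (1 - Phi v) - std_normal_density v * (0 - std_normal_density v)) = std_normal_density v * (std_normal_density v - v * (1 - Phi v))"
    by (simp add: algebra_simps)
  moreover have "std_normal_density v * (std_normal_density v - v * (1 - Phi v)) > 0"
    using mills[of v] normal_density_pos[of 1 0 v] by simp
  ultimately show "\<exists>y. DERIV haz v :> y \<and> y > 0" using S by auto
qed

definition R :: "real \<Rightarrow> real \<Rightarrow> real" where "R d u = (1 - Phi (u + d)) / (1 - Phi u)"

lemma R_strict: assumes "d > 0" "x < y" shows "R d y < R d x"
proof (rule DERIV_neg_imp_decreasing[OF assms(2)])
  fix v :: real
  have S: "1 - Phi v > 0" "1 - Phi (v+d) > 0" using Phi_lt1[of v] Phi_lt1[of "v+d"] by simp_all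
  have "DERIV (R d) v :> ((0 - std_normal_density (v+d) * (1 + 0)) * (1 - Phi v) - (1 - Phi (v+d)) * (0 - std_normal_density v)) / ((1 - Phi v) * (1 - Phi v))"
    unfolding R_def[abs_def] using S
    by (intro derivative_intros DERIV_chain2[OF Phi_deriv] Phi_deriv) auto
  moreover have "haz v < haz (v + d)" using haz_strict assms by simp
  then have "std_normal_density v * (1 - Phi (v+d)) < std_normal_density (v+d) * (1 - Phi v)"
    using S unfolding haz_def by (simp add: field_simps)
  then have num: "((0 - std_normal_density (v+d) * (1 + 0)) * (1 - Phi v) - (1 - Phi (v+d)) * (0 - std_normal_density v)) < 0"
    by (simp add: algebra_simps)
  have den: "(1 - Phi v) * (1 - Phi v) > 0" using S by simp
  have "((0 - std_normal_density (v+d) * (1 + 0)) * (1 - Phi v) - (1 - Phi (v+d)) * (0 - std_normal_density v)) / ((1 - Phi v) * (1 - Phi v)) < 0"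
    by (rule divide_neg_pos[OF num den])
  ultimately show "\<exists>y. DERIV (R d) v :> y \<and> y < 0" by blast
qed

lemma F_R: "F a t c = 1 - R (a - c) (c - t)"
proof -
  have S: "1 - Phi (c - t) > 0" using Phi_lt1 by simp
  show ?thesis unfolding F_def R_def using S by (simp add: field_simps)
qed

lemma F_strict: assumes "c < a" "t1 < t2" shows "F a t2 c < F a t1 c"
  using R_strict[of "a - c" "c - t2" "c - t1"] assms by (simp add: F_R)

lemma F_isCont: "isCont (\<lambda>t. F a t c) t"
proof -
  have S: "1 - Phi (c - t) \<noteq> 0" using Phi_lt1[of "c - t"] by simp
  show ?thesis unfolding F_def using S by (intro continuous_intros) auto
qed


lemma Phi_inv: assumes "0 < p" "p < 1" shows "Phi (Phi_inv p) = p"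
proof -
  have "\<forall>\<^sub>F x in at_bot. Phi x < p" using order_tendstoD(2)[OF Phi_bot assms(1)] .
  then obtain z1 where "\<forall>n\<le>z1. Phi n < p" by (auto simp: eventually_at_bot_linorder)
  then have z1: "Phi z1 < p" by simp
  have "\<forall>\<^sub>F x in at_top. Phi x > p" using order_tendstoD(1)[OF Phi_top assms(2)] .
  then have "\<forall>\<^sub>F x in at_top. Phi x > p \<and> x \<ge> z1" using eventually_ge_at_top by (rule eventually_conj)
  then obtain N where "\<forall>n\<ge>N. Phi n > p \<and> n \<ge> z1" by (auto simp: eventually_at_top_linorder)
  then have z2: "Phi N > p" "N \<ge> z1" by auto
  have "\<exists>x. z1 \<le> x \<and> x \<le> N \<and> Phi x = p"
    by (rule IVT) (use z1 z2 Phi_isCont in \<open>auto simp: less_imp_le\<close>)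
  then obtain z where z: "Phi z = p" by blast
  have "(THE z. Phi z = p) = z"
  proof (rule the_equality[where P="\<lambda>z. Phi z = p", OF z])
    fix w assume w: "Phi w = p"
    show "w = z" using Phi_strict[of w z] Phi_strict[of z w] z w
      by (cases w z rule: linorder_cases) auto
  qed
  then show ?thesis using z by (simp add: Phi_inv_def)
qed

theorem theorem2:
  fixes c p :: real
  assumes "0 < p" and "p < 1"
  shows "((\<lambda>x_obs. theta_p c x_obs p - (x_obs - Phi_inv p)) \<longlongrightarrow> 0) at_top"
proof (rule tendstoI)
  fix e :: real assume e: "e > 0"
  define q where "q = Phi_inv p"
  define h where "h = e / 2"
  have h: "h > 0" "h < e" using e by (auto simp: h_def)
  have q: "Phi q = p" using Phi_inv assms by (simp add: q_def)
  have lim: "((\<lambda>a. F a (a - q + k) c) \<longlongrightarrow> Phi (q - k)) at_top" for k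
  proof -
    have fl: "filterlim (\<lambda>a. c - (a - q + k)) at_bot at_top" by real_asymp
    have "((\<lambda>a. Phi (c - (a - q + k))) \<longlongrightarrow> 0) at_top"
      by (rule filterlim_compose[OF Phi_bot fl])
    then have "((\<lambda>a. (Phi (q - k) - Phi (c - (a - q + k))) / (1 - Phi (c - (a - q + k)))) \<longlongrightarrow> (Phi (q - k) - 0) / (1 - 0)) at_top"
      by (intro tendsto_intros) auto
    then show ?thesis by (simp add: F_def)
  qed
  have ev1: "\<forall>\<^sub>F a in at_top. F a (a - q + h) c < p"
    using order_tendstoD(2)[OF lim[of h]] Phi_strict[of "q - h" q] h q by simp
  have ev2: "\<forall>\<^sub>F a in at_top. F a (a - q + - h) c > p"
    using order_tendstoD(1)[OF lim[of "-h"]] Phi_strict[of q "q + h"] h q by simp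
  show "\<forall>\<^sub>F a in at_top. dist (theta_p c a p - (a - Phi_inv p)) 0 < e"
    using ev1 ev2 eventually_gt_at_top[of c]
  proof eventually_elim
    case (elim a)
    have "\<exists>x. a - q - h \<le> x \<and> x \<le> a - q + h \<and> F a x c = p"
      by (rule IVT2) (use elim h F_isCont in auto)
    then obtain t where t: "a - q - h \<le> t" "t \<le> a - q + h" "F a t c = p" by blast
    have "theta_p c a p = t"
      unfolding theta_p_def
    proof (rule the_equality[where P="\<lambda>\<theta>. F a \<theta> c = p", OF t(3)])
      fix w assume w: "F a w c = p"
      show "w = t" using F_strict[OF elim(3), of w t] F_strict[OF elim(3), of t w] t(3) w
        by (cases w t rule: linorder_cases) auto
    qed
    then show ?case using t h by (simp add: q_def dist_real_def abs_less_iff)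
  qed
qed


end
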